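(* Let $s\in\mathbb{N}$ and let $\widehat{g}:\mathbb{N}\to\mathbb{C}$ be an arbitrary arithmetical function. Then the following are equivalent: (i) for every $a\in\mathbb{N}$, the series $g(a)=\sum_{r=1}^{\infty}\widehat{g}(r)\,c_r^{s}(a^s)$ converges absolutely; (ii) for every $a\in\mathbb{N}$, the series $\gamma(a)=a^s\sum_{m=1}^{\infty}\widehat{g}(am)\,\mu(m)$ converges absolutely. Moreover, in case of convergence, $\gamma=\mu*g$, i.e. $\gamma(a)=\sum_{d\mid a}\mu(a/d)g(d)$ for all $a\in\mathbb{N}$.
   Context: For $s\in\mathbb{N}$ and integers $a,b$, $(a,b)_s$ denotes the largest $d^s$ with $d\in\mathbb{N}$ such that $d^s\mid a$ and $d^s\mid b$. The Cohen–Ramanujan sum is defined for $r,s\in\mathbb{N}$ and $n\in\mathbb{Z}$ by $$c_r^{s}(n)=\sum_{\substack{h=1\\ (h,r^s)_s=1}}^{r^s} e^{2\pi i n h/r^s}.$$ $\mu$ is the Möbius function and $*$ denotes Dirichlet convolution. *)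

theory Defs
  imports Complex_Main "HOL-Computational_Algebra.Squarefree" "HOL-Computational_Algebra.Primes"
begin

definition gcd_pow :: "nat \<Rightarrow> nat \<Rightarrow> nat \<Rightarrow> nat" where
  "gcd_pow s a b = Max {d ^ s | d. d ^ s dvd a \<and> d ^ s dvd b}"

definition cohen_ramanujan :: "nat \<Rightarrow> nat \<Rightarrow> int \<Rightarrow> complex" where
  "cohen_ramanujan s r n =
     (\<Sum>h \<in> {h. 1 \<le> h \<and> h \<le> r ^ s \<and> gcd_pow s h (r ^ s) = 1}.
        exp (2 * of_real pi * \<i> * of_int n * of_nat h / of_nat (r ^ s)))"

text \<open>Moebius function (mu 0 = 0 by convention; only used at positive arguments).\<close>
definition mu :: "nat \<Rightarrow> int" where
  "mu n = (if n = 0 then 0 else if squarefree n then (-1) ^ card (prime_factors n) else 0)"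

end

theory Submission
  imports Defs "HOL-Analysis.Complex_Transcendental"
begin

lemma pow_alt_sum:
  fixes P :: "'a set"
  assumes "finite P"
  shows "(\<Sum>S\<in>Pow P. (-1::int) ^ card S) = (if P = {} then 1 else 0)"
  using assms
proof (induction P rule: finite_induct)
  case empty
  then show ?case by simp
next
  case (insert x F)
  have fin: "finite (Pow F)" using insert by simp
  have "(\<Sum>S\<in>Pow (insert x F). (-1::int) ^ card S)
      = (\<Sum>S\<in>Pow F. (-1::int) ^ card S) + (\<Sum>S\<in>insert x ` Pow F. (-1::int) ^ card S)"
    unfolding Pow_insert by (rule sum.union_disjoint) (use insert in auto)
  also have "(\<Sum>S\<in>insert x ` Pow F. (-1::int) ^ card S) = (\<Sum>S\<in>Pow F. (-1::int) ^ card (insert x S))"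
    by (rule sum.reindex_cong[where l="insert x"]) (use insert in \<open>auto simp: inj_on_def\<close>)
  also have "\<dots> = (\<Sum>S\<in>Pow F. - ((-1::int) ^ card S))"
  proof (rule sum.cong)
    fix S assume "S \<in> Pow F"
    then have "finite S" "x \<notin> S" using insert finite_subset by auto
    then show "(-1::int) ^ card (insert x S) = - ((-1) ^ card S)" by simp
  qed simp
  finally show ?case by (simp add: sum_negf)
qed

lemma squarefree_prod_primes:
  fixes S :: "nat set"
  assumes "finite S" "\<And>p. p \<in> S \<Longrightarrow> prime p"
  shows "squarefree (\<Prod>S)" "prime_factors (\<Prod>S) = S"
    "\<And>p. prime p \<Longrightarrow> multiplicity p (\<Prod>S) = (if p \<in> S then 1 else 0)"
proof -
  have "0 \<notin> S" using assms(2) not_prime_0 by blast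
  then have nz: "\<Prod>S \<noteq> 0" using assms(1) by simp
  show m: "multiplicity p (\<Prod>S) = (if p \<in> S then 1 else 0)" if "prime p" for p
  proof -
    have "multiplicity p (\<Prod>q\<in>S. q ^ (\<lambda>_. 1::nat) q) = (if p \<in> S then 1 else 0)"
      by (rule multiplicity_prod_prime_powers[OF assms(1)]) (use assms that in auto)
    then show ?thesis by simp
  qed
  show "squarefree (\<Prod>S)"
    unfolding squarefree_factorial_semiring''[OF nz] using m by simp
  show "prime_factors (\<Prod>S) = S"
  proof (intro set_eqI)
    fix p :: nat
    show "p \<in> prime_factors (\<Prod>S) \<longleftrightarrow> p \<in> S"
    proof (cases "prime p")
      case True
      then show ?thesis unfolding prime_factors_multiplicity using m[OF True] by simp
    next
      case False
      then show ?thesis unfolding prime_factors_multiplicity using assms(2) by blast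
    qed
  qed
qed

lemma squarefree_prod_factors:
  fixes d :: nat
  assumes "squarefree d"
  shows "\<Prod>(prime_factors d) = d"
proof -
  have nz: "d \<noteq> 0" using assms by (metis not_squarefree_0)
  have "(\<Prod>p\<in>prime_factors d. p ^ multiplicity p d) = d"
    using prod_prime_factors[OF nz] by simp
  moreover have "(\<Prod>p\<in>prime_factors d. p ^ multiplicity p d) = \<Prod>(prime_factors d)"
    using assms nz by (intro prod.cong) (auto simp: squarefree_factorial_semiring'[OF nz])
  ultimately show ?thesis by simp
qed

lemma mu_sum:
  fixes n :: nat
  assumes "n > 0"
  shows "(\<Sum>d | d dvd n. mu d) = (if n = 1 then 1 else 0)"
proof -
  have fin: "finite {d. d dvd n}" using assms by simp
  have "(\<Sum>d | d dvd n. mu d) = (\<Sum>d | d dvd n \<and> squarefree d. mu d)"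
  proof (rule sum.mono_neutral_right[OF fin])
    show "\<forall>i\<in>{d. d dvd n} - {d. d dvd n \<and> squarefree d}. mu i = 0"
    proof
      fix i assume "i \<in> {d. d dvd n} - {d. d dvd n \<and> squarefree d}"
      then have "\<not> squarefree i" by blast
      then show "mu i = 0" unfolding mu_def by simp
    qed
  qed blast
  also have "\<dots> = (\<Sum>d | d dvd n \<and> squarefree d. (-1::int) ^ card (prime_factors d))"
  proof (rule sum.cong)
    fix d assume d: "d \<in> {d. d dvd n \<and> squarefree d}"
    then have "d \<noteq> 0" using assms by auto
    then show "mu d = (-1::int) ^ card (prime_factors d)" using d unfolding mu_def by simp
  qed simp
  also have "\<dots> = (\<Sum>S\<in>Pow (prime_factors n). (-1::int) ^ card S)"
  proof (rule sum.reindex_bij_witness[where i = "\<lambda>S. \<Prod>S" and j = "prime_factors"])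
    fix S assume S: "S \<in> Pow (prime_factors n)"
    then have fS: "finite S" by (meson PowD finite_subset finite_set_mset)
    have pS: "\<And>p. p \<in> S \<Longrightarrow> prime p" using S by auto
    show "prime_factors (\<Prod>S) = S" using squarefree_prod_primes[OF fS pS] by simp
    have "\<Prod>S dvd n"
    proof (rule multiplicity_le_imp_dvd)
      show "\<Prod>S \<noteq> 0" using squarefree_prod_primes(1)[OF fS pS] by (metis not_squarefree_0)
      fix p :: nat assume p: "prime p"
      show "multiplicity p (\<Prod>S) \<le> multiplicity p n"
        using squarefree_prod_primes(3)[OF fS pS p] S p assms
        by (auto simp: prime_factors_multiplicity)
    qed
    then show "\<Prod>S \<in> {d. d dvd n \<and> squarefree d}"
      using squarefree_prod_primes[OF fS pS] by simp
  next
    fix d assume d: "d \<in> {d. d dvd n \<and> squarefree d}"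
    show "\<Prod>(prime_factors d) = d" using d squarefree_prod_factors by auto
    show "(-1::int) ^ card (prime_factors d) = (-1) ^ card (prime_factors d)" by simp
    show "prime_factors d \<in> Pow (prime_factors n)" using d assms dvd_prime_factors[of n d] by simp
  qed
  also have "\<dots> = (if prime_factors n = {} then 1 else 0)"
    by (rule pow_alt_sum) simp
  also have "(prime_factors n = {}) = (n = 1)"
    using assms prime_factorization_empty_iff[of n] by auto
  finally show ?thesis .
qed

lemma gcd_pow_eq_1_iff:
  assumes s: "s \<ge> 1" and r: "r > 0" and h: "h > 0"
  shows "gcd_pow s h (r ^ s) = 1 \<longleftrightarrow> (\<forall>d. d dvd r \<and> d ^ s dvd h \<longrightarrow> d = 1)"
proof -
  define A where "A = {d ^ s | d. d ^ s dvd h \<and> d ^ s dvd r ^ s}"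
  have finA: "finite A" unfolding A_def
    by (rule finite_subset[of _ "{..h}"]) (use h in \<open>auto intro: dvd_imp_le\<close>)
  have oneA: "1 \<in> A" unfolding A_def by (rule CollectI, rule exI[of _ 1]) simp
  have "gcd_pow s h (r ^ s) = Max A" unfolding gcd_pow_def A_def by simp
  also have "Max A = 1 \<longleftrightarrow> (\<forall>x\<in>A. x \<le> 1)"
  proof
    assume "Max A = 1"
    then show "\<forall>x\<in>A. x \<le> 1" using Max_ge[OF finA] by auto
  next
    assume H: "\<forall>x\<in>A. x \<le> 1"
    have "Max A \<in> A" using finA oneA Max_in by blast
    then have "Max A \<le> 1" using H by blast
    moreover have "1 \<le> Max A" using Max_ge[OF finA oneA] .
    ultimately show "Max A = 1" by simp
  qed
  also have "\<dots> \<longleftrightarrow> (\<forall>d. d dvd r \<and> d ^ s dvd h \<longrightarrow> d = 1)"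
  proof
    assume H: "\<forall>x\<in>A. x \<le> 1"
    show "\<forall>d. d dvd r \<and> d ^ s dvd h \<longrightarrow> d = 1"
    proof (intro allI impI)
      fix d assume d: "d dvd r \<and> d ^ s dvd h"
      then have "d ^ s \<in> A" unfolding A_def using s by auto
      then have "d ^ s \<le> 1" using H by auto
      moreover have "d \<noteq> 0" using d h s by (auto simp: power_0_left)
      moreover have "d \<le> d ^ s" using s \<open>d \<noteq> 0\<close> by (intro self_le_power) auto
      ultimately show "d = 1" by linarith
    qed
  next
    assume H: "\<forall>d. d dvd r \<and> d ^ s dvd h \<longrightarrow> d = 1"
    show "\<forall>x\<in>A. x \<le> 1"
    proof
      fix x assume "x \<in> A"
      then obtain d where "x = d ^ s" "d ^ s dvd h" "d ^ s dvd r ^ s" unfolding A_def by auto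
      then have "d = 1" using H s pow_divides_pow_iff[of s d r] by auto
      then show "x \<le> 1" using \<open>x = d ^ s\<close> by simp
    qed
  qed
  finally show ?thesis .
qed

lemma lcm_pow_nat: "lcm (a ^ n) (b ^ n) = lcm (a::nat) b ^ n"
proof (cases "a = 0 \<or> b = 0")
  case True
  then show ?thesis by (cases n) auto
next
  case False
  then have g: "gcd a b ^ n > 0" by simp
  have "lcm (a ^ n) (b ^ n) * gcd a b ^ n = a ^ n * b ^ n"
    using prod_gcd_lcm_nat[of "a ^ n" "b ^ n"] by (simp add: mult.commute)
  also have "\<dots> = (a * b) ^ n" by (simp add: power_mult_distrib)
  also have "\<dots> = (lcm a b * gcd a b) ^ n"
    by (metis prod_gcd_lcm_nat mult.commute)
  also have "\<dots> = lcm a b ^ n * gcd a b ^ n" by (rule power_mult_distrib)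
  finally have "lcm (a ^ n) (b ^ n) * gcd a b ^ n = lcm a b ^ n * gcd a b ^ n" .
  then show ?thesis using g by (metis mult_right_cancel not_gr0)
qed

lemma indicator_mu:
  assumes s: "s \<ge> 1" and r: "r > 0" and h: "h > 0"
  shows "(if gcd_pow s h (r ^ s) = 1 then 1 else 0) = (\<Sum>d | d dvd r \<and> d ^ s dvd h. mu d)"
proof -
  define S where "S = {d. d dvd r \<and> d ^ s dvd h}"
  have finS: "finite S" unfolding S_def using r by simp
  have oneS: "1 \<in> S" unfolding S_def by simp
  define D where "D = Max S"
  have DS: "D \<in> S" unfolding D_def using finS oneS Max_in by blast
  have Dpos: "D > 0" using DS r unfolding S_def by (auto intro: dvd_pos_nat)
  have SD: "S = {d. d dvd D}"
  proof (intro set_eqI iffI)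
    fix d assume d: "d \<in> {d. d dvd D}"
    then show "d \<in> S" using DS unfolding S_def
      by (auto intro: dvd_trans dvd_power_same)
  next
    fix d assume d: "d \<in> S"
    have "lcm d D \<in> S" using d DS unfolding S_def
      by (auto simp: lcm_pow_nat[symmetric])
    then have le: "lcm d D \<le> D" unfolding D_def using finS by simp
    have "D dvd lcm d D" by simp
    moreover have "lcm d D > 0" using d DS Dpos unfolding S_def
      by (metis CollectD dvd_pos_nat lcm_pos_nat r)
    ultimately have "lcm d D = D" using le by (meson dvd_imp_le le_antisym)
    then show "d \<in> {d. d dvd D}" by (metis dvd_lcm1 mem_Collect_eq)
  qed
  have "(\<Sum>d\<in>S. mu d) = (if D = 1 then 1 else 0)" unfolding SD using mu_sum[OF Dpos] by simp
  moreover have "(D = 1) \<longleftrightarrow> (\<forall>d. d dvd r \<and> d ^ s dvd h \<longrightarrow> d = 1)"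
  proof
    assume "D = 1"
    then show "\<forall>d. d dvd r \<and> d ^ s dvd h \<longrightarrow> d = 1" using SD unfolding S_def by auto
  next
    assume "\<forall>d. d dvd r \<and> d ^ s dvd h \<longrightarrow> d = 1"
    then show "D = 1" using DS unfolding S_def by blast
  qed
  ultimately show ?thesis using gcd_pow_eq_1_iff[OF s r h] unfolding S_def by simp
qed

lemma geo_root:
  fixes n :: int and N :: nat
  assumes N: "N > 0"
  shows "(\<Sum>j\<in>{1..N}. exp (2 * of_real pi * \<i> * of_int n * of_nat j / of_nat N))
         = (if int N dvd n then of_nat N else 0)"
proof -
  define \<omega> where "\<omega> = exp (2 * of_real pi * \<i> * of_int n / of_nat N)"
  have trm: "exp (2 * of_real pi * \<i> * of_int n * of_nat j / of_nat N) = \<omega> ^ j" for j :: nat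
  proof -
    have "2 * of_real pi * \<i> * of_int n * of_nat j / of_nat N
          = of_nat j * (2 * of_real pi * \<i> * of_int n / of_nat N)" by simp
    then show ?thesis unfolding \<omega>_def by (simp only: exp_of_nat_mult)
  qed
  have sum_eq: "(\<Sum>j\<in>{1..N}. exp (2 * of_real pi * \<i> * of_int n * of_nat j / of_nat N))
      = (\<Sum>j\<in>{1..N}. \<omega> ^ j)" using trm by simp
  show ?thesis
  proof (cases "int N dvd n")
    case True
    then obtain k where k: "n = int N * k" by blast
    have "\<omega> = exp (\<i> * (of_int k * (of_real pi * 2)))"
      unfolding \<omega>_def k using N by (simp add: field_simps)
    then have "\<omega> = 1" by simp
    then show ?thesis using sum_eq True by simp
  next
    case False
    have "\<omega> \<noteq> 1"
    proof
      assume "\<omega> = 1"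
      then obtain m :: int where m: "Im (2 * of_real pi * \<i> * of_int n / of_nat N) = of_int (2 * m) * pi"
        unfolding \<omega>_def exp_eq_1 by blast
      have "Im (2 * of_real pi * \<i> * of_int n / of_nat N) = 2 * pi * of_int n / of_nat N"
        by simp
      with m have "2 * pi * of_int n / of_nat N = of_int (2 * m) * pi" by simp
      then have "real_of_int n = of_nat N * of_int m" using N by (simp add: field_simps)
      then have "n = int N * m" by (metis of_int_eq_iff of_int_mult of_int_of_nat_eq)
      then show False using False by simp
    qed
    have wN: "\<omega> ^ N = 1"
    proof -
      have "\<omega> ^ N = exp (of_nat N * (2 * of_real pi * \<i> * of_int n / of_nat N))"
        unfolding \<omega>_def by (simp only: exp_of_nat_mult)
      also have "\<dots> = exp (\<i> * (of_int n * (of_real pi * 2)))" using N by (simp add: field_simps)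
      also have "\<dots> = 1" by simp
      finally show ?thesis .
    qed
    have "(\<Sum>j\<in>{1..N}. \<omega> ^ j) = (\<Sum>j<N. \<omega> ^ Suc j)"
      by (simp add: sum.atLeast1_atMost_eq)
    also have "\<dots> = \<omega> * (\<Sum>j<N. \<omega> ^ j)" by (simp add: sum_distrib_left)
    also have "\<dots> = \<omega> * ((\<omega> ^ N - 1) / (\<omega> - 1))" using \<open>\<omega> \<noteq> 1\<close> by (simp add: geometric_sum)
    also have "\<dots> = 0" using wN by simp
    finally show ?thesis using sum_eq False by simp
  qed
qed
lemma cr_closed:
  assumes s: "s \<ge> 1" and r: "r > 0"
  shows "cohen_ramanujan s r n = (\<Sum>d | d dvd r. of_int (mu d) *
           (if int ((r div d) ^ s) dvd n then of_nat ((r div d) ^ s) else 0))"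
proof -
  define R where "R = r ^ s"
  define E where "E h = exp (2 * of_real pi * \<i> * of_int n * of_nat h / of_nat R)" for h :: nat
  have finD: "finite {d. d dvd r}" using r by simp
  have "cohen_ramanujan s r n = (\<Sum>h \<in> {h\<in>{1..R}. gcd_pow s h R = 1}. E h)"
    unfolding cohen_ramanujan_def R_def E_def by (rule sum.cong) auto
  also have "\<dots> = (\<Sum>h\<in>{1..R}. if gcd_pow s h R = 1 then E h else 0)"
    by (rule sum.inter_filter) simp
  also have "\<dots> = (\<Sum>h\<in>{1..R}. of_int (\<Sum>d | d dvd r \<and> d ^ s dvd h. mu d) * E h)"
  proof (rule sum.cong)
    fix h assume "h \<in> {1..R}"
    then have h: "h > 0" by simp
    have "(if gcd_pow s h R = 1 then E h else 0) = of_int (if gcd_pow s h (r ^ s) = 1 then 1 else 0) * E h"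
      unfolding R_def by simp
    also have "\<dots> = of_int (\<Sum>d | d dvd r \<and> d ^ s dvd h. mu d) * E h"
      using indicator_mu[OF s r h] by simp
    finally show "(if gcd_pow s h R = 1 then E h else 0) = of_int (\<Sum>d | d dvd r \<and> d ^ s dvd h. mu d) * E h" .
  qed simp
  also have "\<dots> = (\<Sum>h\<in>{1..R}. \<Sum>d | d dvd r. if d ^ s dvd h then of_int (mu d) * E h else 0)"
  proof (rule sum.cong)
    fix h
    have "{d. d dvd r \<and> d ^ s dvd h} = {d \<in> {d. d dvd r}. d ^ s dvd h}" by simp
    then have "(\<Sum>d | d dvd r \<and> d ^ s dvd h. of_int (mu d) * E h)
        = (\<Sum>d | d dvd r. if d ^ s dvd h then of_int (mu d) * E h else 0)"
      using sum.inter_filter[OF finD, of "\<lambda>d. of_int (mu d) * E h" "\<lambda>d. d ^ s dvd h"] by simp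
    then show "of_int (\<Sum>d | d dvd r \<and> d ^ s dvd h. mu d) * E h
        = (\<Sum>d | d dvd r. if d ^ s dvd h then of_int (mu d) * E h else 0)"
      by (simp add: sum_distrib_right)
  qed simp
  also have "\<dots> = (\<Sum>d | d dvd r. \<Sum>h\<in>{1..R}. if d ^ s dvd h then of_int (mu d) * E h else 0)"
    by (rule sum.swap)
  also have "\<dots> = (\<Sum>d | d dvd r. of_int (mu d) *
           (if int ((r div d) ^ s) dvd n then of_nat ((r div d) ^ s) else 0))"
  proof (rule sum.cong)
    fix d assume "d \<in> {d. d dvd r}"
    then have dr: "d dvd r" by simp
    define M where "M = (r div d) ^ s"
    have dpos: "d > 0" using dr r by (auto intro: dvd_pos_nat)
    have RM: "R = d ^ s * M" unfolding R_def M_def using dr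
      by (metis dvd_mult_div_cancel power_mult_distrib)
    have "r div d > 0" using dr r by (metis dvd_mult_div_cancel mult_0_right neq0_conv)
    then have Mpos: "M > 0" unfolding M_def by simp
    have "(\<Sum>h\<in>{1..R}. if d ^ s dvd h then of_int (mu d) * E h else 0)
        = (\<Sum>h\<in>{h\<in>{1..R}. d ^ s dvd h}. of_int (mu d) * E h)"
      by (rule sum.inter_filter[symmetric]) simp
    also have "{h\<in>{1..R}. d ^ s dvd h} = (\<lambda>j. d ^ s * j) ` {1..M}"
    proof (intro set_eqI iffI)
      fix h assume H: "h \<in> {h\<in>{1..R}. d ^ s dvd h}"
      then have h1: "1 \<le> h" "h \<le> R" "d ^ s dvd h" by auto
      from h1(3) obtain j where j: "h = d ^ s * j" by (rule dvdE)
      have dsp: "d ^ s > 0" using dpos by simp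
      have "j \<noteq> 0" using h1(1) j by (auto)
      moreover have "j \<le> M" using h1(2) j dsp dpos unfolding RM by (simp)
      ultimately have "1 \<le> j" "j \<le> M" by auto
      then show "h \<in> (\<lambda>j. d ^ s * j) ` {1..M}" using j by auto
    next
      fix h assume "h \<in> (\<lambda>j. d ^ s * j) ` {1..M}"
      then obtain j where jM: "j \<in> {1..M}" and j0: "h = d ^ s * j" by (rule imageE)
      then have j: "h = d ^ s * j" "1 \<le> j" "j \<le> M" by auto
      have dsp: "d ^ s > 0" using dpos by simp
      have "1 \<le> h" using j dsp dpos by (simp add: Suc_le_eq)
      moreover have "h \<le> R" unfolding RM using j dsp by simp
      moreover have "d ^ s dvd h" using j by simp
      ultimately show "h \<in> {h\<in>{1..R}. d ^ s dvd h}" by simp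
    qed
    also have "(\<Sum>h\<in>(\<lambda>j. d ^ s * j) ` {1..M}. of_int (mu d) * E h)
        = (\<Sum>j\<in>{1..M}. of_int (mu d) * E (d ^ s * j))"
      by (rule sum.reindex_cong[OF _ refl]) (use dpos in \<open>auto simp: inj_on_def\<close>)
    also have "\<dots> = of_int (mu d) * (\<Sum>j\<in>{1..M}. exp (2 * of_real pi * \<i> * of_int n * of_nat j / of_nat M))"
    proof -
      have "E (d ^ s * j) = exp (2 * of_real pi * \<i> * of_int n * of_nat j / of_nat M)" for j
      proof -
        have "(of_nat (d ^ s) :: complex) \<noteq> 0" using dpos by simp
        then have "2 * of_real pi * \<i> * of_int n * of_nat (d ^ s * j) / of_nat R
            = 2 * of_real pi * \<i> * of_int n * of_nat j / (of_nat M :: complex)"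
          using dpos unfolding RM by (simp add: field_simps)
        then show ?thesis unfolding E_def by simp
      qed
      then show ?thesis by (simp add: sum_distrib_left)
    qed
    also have "\<dots> = of_int (mu d) * (if int M dvd n then of_nat M else 0)"
      using geo_root[OF Mpos] by simp
    finally show "(\<Sum>h\<in>{1..R}. if d ^ s dvd h then of_int (mu d) * E h else 0) =
        of_int (mu d) * (if int ((r div d) ^ s) dvd n then of_nat ((r div d) ^ s) else 0)"
      unfolding M_def .
  qed simp
  finally show ?thesis .
qed

lemma div_div_dvd: "d dvd (r::nat) \<Longrightarrow> r > 0 \<Longrightarrow> r div (r div d) = d"
proof -
  assume "d dvd r" "r > 0"
  then obtain k where k: "r = d * k" by blast
  then have "d > 0" "k > 0" using \<open>r > 0\<close> by auto
  then show ?thesis using k by simp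
qed

lemma cr_pow:
  assumes s: "s \<ge> 1" and r: "r > 0" and b: "b > 0"
  shows "cohen_ramanujan s r (int b ^ s)
         = of_int (\<Sum>e | e dvd b. (if e dvd r then mu (r div e) * int e ^ s else 0))"
proof -
  define F where "F e = (if e dvd r \<and> e dvd b then mu (r div e) * int e ^ s else 0)" for e
  have "cohen_ramanujan s r (int b ^ s) = (\<Sum>d | d dvd r. of_int (mu d) *
           (if int ((r div d) ^ s) dvd int b ^ s then of_nat ((r div d) ^ s) else 0))"
    by (rule cr_closed[OF s r])
  also have "\<dots> = (\<Sum>d | d dvd r. of_int (mu d * (if r div d dvd b then int (r div d) ^ s else 0)))"
  proof (rule sum.cong)
    fix d
    have "int ((r div d) ^ s) dvd int b ^ s \<longleftrightarrow> r div d dvd b"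
      using s by (simp only: of_nat_power[symmetric] of_nat_dvd_iff pow_divides_pow_iff)
    then show "of_int (mu d) * (if int ((r div d) ^ s) dvd int b ^ s then of_nat ((r div d) ^ s) else 0)
       = (of_int (mu d * (if r div d dvd b then int (r div d) ^ s else 0)) :: complex)"
      by simp
  qed simp
  also have "\<dots> = of_int (\<Sum>d | d dvd r. mu d * (if r div d dvd b then int (r div d) ^ s else 0))"
    by simp
  also have "(\<Sum>d | d dvd r. mu d * (if r div d dvd b then int (r div d) ^ s else 0))
      = (\<Sum>e | e dvd r. F e)"
  proof (rule sum.reindex_bij_witness[where i = "\<lambda>d. r div d" and j = "\<lambda>d. r div d"])
    fix d assume d: "d \<in> {d. d dvd r}"
    then show "r div (r div d) = d" using r div_div_dvd by simp
    show "r div d \<in> {d. d dvd r}" using d by (auto simp: div_dvd_div)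
    show "F (r div d) = mu d * (if r div d dvd b then int (r div d) ^ s else 0)"
      using d r div_div_dvd[of d r] unfolding F_def by auto
  next
    fix d assume d: "d \<in> {d. d dvd r}"
    then show "r div (r div d) = d" using r div_div_dvd by simp
    show "r div d \<in> {d. d dvd r}" using d by (auto simp: div_dvd_div)
  qed
  also have "(\<Sum>e | e dvd r. F e) = (\<Sum>e | e dvd r \<and> e dvd b. F e)"
    by (rule sum.mono_neutral_right) (use r in \<open>auto simp: F_def\<close>)
  also have "\<dots> = (\<Sum>e | e dvd b. F e)"
    by (rule sum.mono_neutral_left) (use b in \<open>auto simp: F_def\<close>)
  also have "\<dots> = (\<Sum>e | e dvd b. (if e dvd r then mu (r div e) * int e ^ s else 0))"
    by (rule sum.cong) (auto simp: F_def)
  finally show ?thesis .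
qed


lemma inner_mu_sum:
  assumes a: "a > 0" and e: "e dvd a"
  shows "(\<Sum>b | b dvd a \<and> e dvd b. mu (a div b)) = (if e = a then 1 else 0)"
proof -
  obtain t where t: "a = e * t" using e by blast
  have ep: "e > 0" and tp: "t > 0" using t a by auto
  have at: "a div e = t" using t ep by simp
  have "(\<Sum>b | b dvd a \<and> e dvd b. mu (a div b)) = (\<Sum>k | k dvd t. mu k)"
  proof (rule sum.reindex_bij_witness[where i = "\<lambda>k. a div k" and j = "\<lambda>b. a div b"])
    fix b assume b: "b \<in> {b. b dvd a \<and> e dvd b}"
    then show "a div (a div b) = b" using div_div_dvd a by blast
    from b obtain u where u: "b = e * u" by blast
    from b obtain m where m: "a = b * m" by blast
    have "a div b = m" using m a by (metis div_mult_self1_is_m gr0I mult_is_0 mult.commute)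
    moreover have "t = u * m" using t m u ep by (simp add: mult.assoc)
    ultimately show "a div b \<in> {k. k dvd t}" by simp
    show "mu (a div b) = mu (a div b)" ..
  next
    fix k assume k: "k \<in> {k. k dvd t}"
    then obtain m where m: "t = k * m" by blast
    have kp: "k > 0" using m tp by (auto intro: gr0I)
    have "a = k * (e * m)" using t m by (simp add: ac_simps)
    then have adk: "a div k = e * m" using kp by simp
    have "k dvd a" using \<open>a = k * (e * m)\<close> by simp
    then show "a div (a div k) = k" using div_div_dvd a by blast
    show "a div k \<in> {b. b dvd a \<and> e dvd b}" using adk \<open>a = k * (e * m)\<close> by simp
  qed
  also have "\<dots> = (if t = 1 then 1 else 0)" using mu_sum tp by blast
  also have "(t = 1) = (e = a)" using t ep by auto
  finally show ?thesis .
qed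

lemma mobius_inv:
  fixes f :: "nat \<Rightarrow> int"
  assumes a: "a > 0"
  shows "(\<Sum>b | b dvd a. mu (a div b) * (\<Sum>e | e dvd b. f e)) = f a"
proof -
  define D where "D = {d. d dvd a}"
  have finD: "finite D" unfolding D_def using a by simp
  have "(\<Sum>b | b dvd a. mu (a div b) * (\<Sum>e | e dvd b. f e))
      = (\<Sum>b\<in>D. \<Sum>e\<in>{e. e \<in> D \<and> e dvd b}. mu (a div b) * f e)"
  proof (rule sum.cong)
    fix b assume "b \<in> D"
    then have "{e. e dvd b} = {e. e \<in> D \<and> e dvd b}" unfolding D_def by (auto intro: dvd_trans)
    then show "mu (a div b) * (\<Sum>e | e dvd b. f e) = (\<Sum>e\<in>{e. e \<in> D \<and> e dvd b}. mu (a div b) * f e)"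
      by (simp add: sum_distrib_left)
  qed (simp add: D_def)
  also have "\<dots> = (\<Sum>e\<in>D. \<Sum>b\<in>{b. b \<in> D \<and> e dvd b}. mu (a div b) * f e)"
    by (rule sum.swap_restrict[OF finD finD])
  also have "\<dots> = (\<Sum>e\<in>D. (if e = a then f e else 0))"
  proof (rule sum.cong)
    fix e assume e: "e \<in> D"
    have "(\<Sum>b\<in>{b. b \<in> D \<and> e dvd b}. mu (a div b) * f e) = (\<Sum>b | b dvd a \<and> e dvd b. mu (a div b)) * f e"
      unfolding D_def by (simp add: sum_distrib_right)
    also have "\<dots> = (if e = a then f e else 0)" using inner_mu_sum[OF a] e unfolding D_def by simp
    finally show "(\<Sum>b\<in>{b. b \<in> D \<and> e dvd b}. mu (a div b) * f e) = (if e = a then f e else 0)" .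
  qed simp
  also have "\<dots> = f a" using finD unfolding D_def by simp
  finally show ?thesis .
qed

lemma abs_mu_le: "\<bar>mu n\<bar> \<le> 1"
  unfolding mu_def by (auto simp: power_abs)

lemma cr_inv:
  assumes s: "s \<ge> 1" and r: "r > 0" and a: "a > 0"
  shows "(\<Sum>b | b dvd a. of_int (mu (a div b)) * cohen_ramanujan s r (int b ^ s))
         = of_int (if a dvd r then mu (r div a) * int a ^ s else 0)"
proof -
  define f where "f e = (if e dvd r then mu (r div e) * int e ^ s else 0)" for e
  have "(\<Sum>b | b dvd a. of_int (mu (a div b)) * cohen_ramanujan s r (int b ^ s))
      = (\<Sum>b | b dvd a. of_int (mu (a div b) * (\<Sum>e | e dvd b. f e)) :: complex)"
  proof (rule sum.cong)
    fix b assume "b \<in> {b. b dvd a}"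
    then have "b > 0" using a by (auto intro: dvd_pos_nat)
    then show "of_int (mu (a div b)) * cohen_ramanujan s r (int b ^ s) = of_int (mu (a div b) * (\<Sum>e | e dvd b. f e))"
      using cr_pow[OF s r] unfolding f_def by simp
  qed simp
  also have "\<dots> = of_int (\<Sum>b | b dvd a. mu (a div b) * (\<Sum>e | e dvd b. f e))" by simp
  also have "\<dots> = of_int (f a)" using mobius_inv[OF a] by simp
  finally show ?thesis unfolding f_def .
qed

lemma cr_bound:
  assumes s: "s \<ge> 1" and r: "r > 0" and a: "a > 0"
  shows "norm (z * cohen_ramanujan s r (int a ^ s))
     \<le> (\<Sum>e | e dvd a. if e dvd r then norm (z * of_int (mu (r div e))) * real e ^ s else 0)"
proof -
  have "z * cohen_ramanujan s r (int a ^ s)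
      = (\<Sum>e | e dvd a. z * of_int (if e dvd r then mu (r div e) * int e ^ s else 0))"
    using cr_pow[OF s r a] by (simp add: sum_distrib_left)
  also have "\<dots> = (\<Sum>e | e dvd a. (if e dvd r then z * of_int (mu (r div e)) * of_nat e ^ s else 0))"
    by (rule sum.cong) auto
  finally have "norm (z * cohen_ramanujan s r (int a ^ s))
      = norm (\<Sum>e | e dvd a. (if e dvd r then z * of_int (mu (r div e)) * of_nat e ^ s else 0))"
    by simp
  also have "\<dots> \<le> (\<Sum>e | e dvd a. norm (if e dvd r then z * of_int (mu (r div e)) * of_nat e ^ s else 0))"
    by (rule norm_sum)
  also have "\<dots> = (\<Sum>e | e dvd a. if e dvd r then norm (z * of_int (mu (r div e))) * real e ^ s else 0)"
    by (rule sum.cong) (auto simp: norm_mult norm_power)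
  finally show ?thesis .
qed

lemma reindex_dvd:
  fixes f :: "nat \<Rightarrow> 'a::{t2_space,comm_monoid_add,topological_space}"
  assumes a: "a > 0" and z: "\<And>n. \<not> a dvd Suc n \<Longrightarrow> f n = 0"
  shows "summable (\<lambda>m. f (a * Suc m - 1)) \<longleftrightarrow> summable f"
    and "suminf (\<lambda>m. f (a * Suc m - 1)) = suminf f"
proof -
  have sm: "strict_mono (\<lambda>m. a * Suc m - 1)"
    unfolding strict_mono_Suc_iff using a by (auto simp: algebra_simps)
  have zz: "f n = 0" if "n \<notin> range (\<lambda>m. a * Suc m - 1)" for n
  proof (rule z, rule notI)
    assume "a dvd Suc n"
    then obtain k where k: "Suc n = a * k" by blast
    then have "k > 0" by (auto intro: gr0I)
    then have "n = a * Suc (k - 1) - 1" using k by simp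
    then show False using that by blast
  qed
  show "summable (\<lambda>m. f (a * Suc m - 1)) \<longleftrightarrow> summable f"
    by (rule summable_mono_reindex[OF sm zz])
  show "suminf (\<lambda>m. f (a * Suc m - 1)) = suminf f"
    by (rule suminf_mono_reindex[OF sm zz])
qed


theorem mainTheorem3:
  fixes s :: nat and ghat :: "nat \<Rightarrow> complex"
  assumes "s \<ge> 1"
  shows "((\<forall>a\<ge>1. summable (\<lambda>r. norm (ghat (Suc r) * cohen_ramanujan s (Suc r) (int a ^ s))))
          \<longleftrightarrow>
          (\<forall>a\<ge>1. summable (\<lambda>m. norm (ghat (a * Suc m) * of_int (mu (Suc m))))))
     \<and> ((\<forall>a\<ge>1. summable (\<lambda>r. norm (ghat (Suc r) * cohen_ramanujan s (Suc r) (int a ^ s))))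
        \<longrightarrow> (\<forall>a\<ge>1.
              of_nat a ^ s * (\<Sum>m. ghat (a * Suc m) * of_int (mu (Suc m)))
              = (\<Sum>d | d dvd a. of_int (mu (a div d)) *
                   (\<Sum>r. ghat (Suc r) * cohen_ramanujan s (Suc r) (int d ^ s)))))"
proof -
  have s: "s \<ge> 1" using assms .
  define T where "T b r = ghat (Suc r) * cohen_ramanujan s (Suc r) (int b ^ s)" for b r
  define V where "V a m = ghat (a * Suc m) * of_int (mu (Suc m))" for a m
  define I where "I \<longleftrightarrow> (\<forall>a\<ge>1. summable (\<lambda>r. norm (T a r)))"
  define II where "II \<longleftrightarrow> (\<forall>a\<ge>1. summable (\<lambda>m. norm (V a m)))"
  have I_II: "II" if "I"
    unfolding II_def
  proof (intro allI impI)
    fix a :: nat assume a1: "a \<ge> 1"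
    then have a: "a > 0" by simp
    define G where "G r = (\<Sum>b | b dvd a. norm (T b r))" for r
    have sG: "summable G" unfolding G_def
    proof (rule summable_sum)
      fix b assume "b \<in> {b. b dvd a}"
      then have "b \<ge> 1" using a by (auto intro: dvd_pos_nat simp: Suc_le_eq)
      then show "summable (\<lambda>r. norm (T b r))" using that unfolding I_def by blast
    qed
    define H where "H r = (if a dvd Suc r then G r else 0)" for r
    have sH: "summable H"
      by (rule summable_comparison_test[OF _ sG]) (auto simp: H_def G_def intro!: sum_nonneg)
    have sH': "summable (\<lambda>m. H (a * Suc m - 1))"
      using reindex_dvd(1)[of a H] a sH by (simp add: H_def)
    show "summable (\<lambda>m. norm (V a m))"
    proof (rule summable_comparison_test[OF _ sH'])
      show "\<exists>N. \<forall>m\<ge>N. norm (norm (V a m)) \<le> H (a * Suc m - 1)"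
      proof (intro exI allI impI)
        fix m :: nat
        define N where "N = a * Suc m"
        have SN: "Suc (a * Suc m - 1) = N" using a unfolding N_def by simp
        have Npos: "N > 0" using a unfolding N_def by simp
        have aN: "a dvd N" and Na: "N div a = Suc m" using a unfolding N_def by simp+
        have "norm (V a m) \<le> norm (V a m) * real a ^ s"
          using a by (simp add: mult_le_cancel_left1 one_le_power)
        also have "\<dots> = norm (ghat N * of_int (mu (Suc m) * int a ^ s))"
          unfolding V_def N_def by (simp add: norm_mult norm_power)
        also have "ghat N * of_int (mu (Suc m) * int a ^ s)
           = ghat N * (\<Sum>b | b dvd a. of_int (mu (a div b)) * cohen_ramanujan s N (int b ^ s))"
          using cr_inv[OF s Npos a] aN Na by simp
        also have "\<dots> = (\<Sum>b | b dvd a. of_int (mu (a div b)) * (ghat N * cohen_ramanujan s N (int b ^ s)))"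
          by (simp add: sum_distrib_left ac_simps)
        also have "norm \<dots> \<le> (\<Sum>b | b dvd a. norm (of_int (mu (a div b)) * (ghat N * cohen_ramanujan s N (int b ^ s))))"
          by (rule norm_sum)
        also have "\<dots> \<le> (\<Sum>b | b dvd a. norm (ghat N * cohen_ramanujan s N (int b ^ s)))"
        proof (rule sum_mono)
          fix b
          have "norm (of_int (mu (a div b)) * (ghat N * cohen_ramanujan s N (int b ^ s)))
             = \<bar>real_of_int (mu (a div b))\<bar> * norm (ghat N * cohen_ramanujan s N (int b ^ s))"
            by (simp add: norm_mult)
          also have "\<dots> \<le> 1 * norm (ghat N * cohen_ramanujan s N (int b ^ s))"
            using abs_mu_le[of "a div b"] by (intro mult_right_mono) (simp_all)
          finally show "norm (of_int (mu (a div b)) * (ghat N * cohen_ramanujan s N (int b ^ s)))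
             \<le> norm (ghat N * cohen_ramanujan s N (int b ^ s))" by simp
        qed
        also have "\<dots> = H (a * Suc m - 1)"
          unfolding H_def G_def T_def SN using aN by simp
        finally show "norm (norm (V a m)) \<le> H (a * Suc m - 1)" by simp
      qed
    qed
  qed
  have II_I: "I" if "II"
    unfolding I_def
  proof (intro allI impI)
    fix a :: nat assume a1: "a \<ge> 1"
    then have a: "a > 0" by simp
    define K where "K e r = (if e dvd Suc r then norm (ghat (Suc r) * of_int (mu (Suc r div e))) * real e ^ s else 0)" for e r
    have sK: "summable (\<lambda>r. \<Sum>e | e dvd a. K e r)"
    proof (rule summable_sum)
      fix e assume "e \<in> {e. e dvd a}"
      then have e: "e > 0" using a by (auto intro: dvd_pos_nat)
      then have "summable (\<lambda>m. norm (V e m))" using that unfolding II_def by (simp add: Suc_le_eq)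
      then have "summable (\<lambda>m. norm (V e m) * real e ^ s)" by (rule summable_mult2)
      moreover have "K e (e * Suc m - 1) = norm (V e m) * real e ^ s" for m
      proof -
        have "Suc (e * Suc m - 1) = e * Suc m" using e by simp
        then show ?thesis unfolding K_def V_def using e by simp
      qed
      ultimately have "summable (\<lambda>m. K e (e * Suc m - 1))" by simp
      then show "summable (K e)" using reindex_dvd(1)[of e "K e"] e by (simp add: K_def)
    qed
    show "summable (\<lambda>r. norm (T a r))"
    proof (rule summable_comparison_test[OF _ sK])
      show "\<exists>N. \<forall>r\<ge>N. norm (norm (T a r)) \<le> (\<Sum>e | e dvd a. K e r)"
        using cr_bound[OF s _ a] unfolding T_def K_def by simp
    qed
  qed
  have ident: "of_nat a ^ s * (\<Sum>m. V a m) = (\<Sum>d | d dvd a. of_int (mu (a div d)) * (\<Sum>r. T d r))"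
    if "I" "a \<ge> 1" for a :: nat
  proof -
    have a: "a > 0" using that by simp
    have sT: "summable (T d)" if "d dvd a" for d
    proof -
      have "d \<ge> 1" using that a by (auto intro: dvd_pos_nat simp: Suc_le_eq)
      then show ?thesis using \<open>I\<close> unfolding I_def by (blast intro: summable_norm_cancel)
    qed
    have sV: "summable (V a)" using I_II[OF \<open>I\<close>] \<open>a \<ge> 1\<close> unfolding II_def
      by (blast intro: summable_norm_cancel)
    define U where "U r = ghat (Suc r) * of_int (if a dvd Suc r then mu (Suc r div a) * int a ^ s else 0)" for r
    have "(\<Sum>d | d dvd a. of_int (mu (a div d)) * (\<Sum>r. T d r))
        = (\<Sum>d | d dvd a. (\<Sum>r. of_int (mu (a div d)) * T d r))"
      by (rule sum.cong) (use sT in \<open>auto intro: suminf_mult[symmetric]\<close>)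
    also have "\<dots> = (\<Sum>r. \<Sum>d | d dvd a. of_int (mu (a div d)) * T d r)"
      by (rule suminf_sum[symmetric]) (use sT in \<open>auto intro: summable_mult\<close>)
    also have "\<dots> = (\<Sum>r. U r)"
    proof (rule suminf_cong)
      fix r
      have "(\<Sum>d | d dvd a. of_int (mu (a div d)) * T d r)
         = ghat (Suc r) * (\<Sum>d | d dvd a. of_int (mu (a div d)) * cohen_ramanujan s (Suc r) (int d ^ s))"
        unfolding T_def by (simp add: sum_distrib_left ac_simps)
      also have "\<dots> = U r" unfolding U_def using cr_inv[OF s _ a, of "Suc r"] by simp
      finally show "(\<Sum>d | d dvd a. of_int (mu (a div d)) * T d r) = U r" .
    qed
    also have "\<dots> = (\<Sum>m. U (a * Suc m - 1))"
      by (rule reindex_dvd(2)[symmetric]) (use a in \<open>simp_all add: U_def\<close>)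
    also have "\<dots> = (\<Sum>m. of_nat a ^ s * V a m)"
    proof (rule suminf_cong)
      fix m
      have "Suc (a * Suc m - 1) = a * Suc m" using a by simp
      then show "U (a * Suc m - 1) = of_nat a ^ s * V a m" unfolding U_def V_def using a by simp
    qed
    also have "\<dots> = of_nat a ^ s * (\<Sum>m. V a m)" by (rule suminf_mult[OF sV])
    finally show ?thesis by simp
  qed
  have "I \<longleftrightarrow> II" using I_II II_I by blast
  then show ?thesis using ident unfolding I_def II_def T_def V_def by blast
qed

end
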